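(* Let $n\ge 3$ be odd, $d,R\in\mathbb{Q}$ with $d\ne0$ and $R$ not a square in $\mathbb{Q}$, $D=d^2-R$. Then $f_n=f_n(Z,d,R)$ is irreducible in $\mathbb{Q}[Z]$ if and only if, for every prime $p$ dividing $n$, the number $(d+\sqrt R)/(d-\sqrt R)$ is not a $p$th power in $\mathbb{Q}(\sqrt R)$.
   Context: For $k\ge1$, $F_k=\sum_{j=0}^{\lfloor k/2\rfloor}(-1)^j\frac{k}{k-j}\binom{k-j}{j}Z^{k-2j}$ (so $2\cos(kx)=F_k(2\cos x)$). For odd $n\ge3$, $d\ne0$, $R$ non-square, $D=d^2-R$: $$f_n(Z,d,R)=\sqrt D^{\,n}F_n(Z/\sqrt D)-2dD^{(n-1)/2}=\sum_{j=0}^{(n-1)/2}(-1)^j\frac{n}{n-j}\binom{n-j}{j}D^jZ^{n-2j}-2dD^{(n-1)/2}.$$ *)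

theory Defs
  imports Complex_Main "HOL-Computational_Algebra.Polynomial"
begin

definition fpoly :: "nat \<Rightarrow> rat \<Rightarrow> rat \<Rightarrow> rat poly" where
  "fpoly n d R = (let D = d^2 - R in
     (\<Sum>j\<in>{0..(n - 1) div 2}.
        monom ((-1)^j * (of_nat n / of_nat (n - j)) * of_nat ((n - j) choose j) * D^j) (n - 2*j))
     - [: 2 * d * D ^ ((n - 1) div 2) :])"

definition sqrtR :: "rat \<Rightarrow> complex" where
  "sqrtR R = csqrt (of_real (of_rat R))"

definition quad_field :: "rat \<Rightarrow> complex set" where
  "quad_field R = {of_real (of_rat a) + of_real (of_rat b) * sqrtR R | a b. True}"

end

theory Submission
  imports Defs "HOL-Computational_Algebra.Fundamental_Theorem_Algebra"
begin

definition subfieldC :: "complex set \<Rightarrow> bool" where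
  "subfieldC F \<longleftrightarrow> 0 \<in> F \<and> 1 \<in> F \<and> (\<forall>x\<in>F. \<forall>y\<in>F. x + y \<in> F \<and> x * y \<in> F) \<and>
     (\<forall>x\<in>F. - x \<in> F \<and> inverse x \<in> F)"

lemma subfieldC_0: "subfieldC F \<Longrightarrow> 0 \<in> F" and subfieldC_1: "subfieldC F \<Longrightarrow> 1 \<in> F"
  and subfieldC_add: "subfieldC F \<Longrightarrow> x \<in> F \<Longrightarrow> y \<in> F \<Longrightarrow> x + y \<in> F"
  and subfieldC_mult: "subfieldC F \<Longrightarrow> x \<in> F \<Longrightarrow> y \<in> F \<Longrightarrow> x * y \<in> F"
  and subfieldC_uminus: "subfieldC F \<Longrightarrow> x \<in> F \<Longrightarrow> - x \<in> F"
  and subfieldC_inverse: "subfieldC F \<Longrightarrow> x \<in> F \<Longrightarrow> inverse x \<in> F"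
  by (auto simp: subfieldC_def)

lemma subfieldC_diff: "subfieldC F \<Longrightarrow> x \<in> F \<Longrightarrow> y \<in> F \<Longrightarrow> x - y \<in> F"
  using subfieldC_add[of F x "-y"] subfieldC_uminus[of F y] by simp

lemma subfieldC_divide: "subfieldC F \<Longrightarrow> x \<in> F \<Longrightarrow> y \<in> F \<Longrightarrow> x / y \<in> F"
  by (simp add: divide_inverse subfieldC_mult subfieldC_inverse)

lemma subfieldC_power: "subfieldC F \<Longrightarrow> x \<in> F \<Longrightarrow> x ^ n \<in> F"
  by (induction n) (auto intro: subfieldC_1 subfieldC_mult)

lemma subfieldC_sum: "subfieldC F \<Longrightarrow> (\<And>i. i \<in> A \<Longrightarrow> f i \<in> F) \<Longrightarrow> sum f A \<in> F"
  by (induction A rule: infinite_finite_induct) (auto intro: subfieldC_0 subfieldC_add)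

lemma subfieldC_prod: "subfieldC F \<Longrightarrow> (\<And>i. i \<in> A \<Longrightarrow> f i \<in> F) \<Longrightarrow> prod f A \<in> F"
  by (induction A rule: infinite_finite_induct) (auto intro: subfieldC_1 subfieldC_mult)

lemma subfieldC_of_nat: "subfieldC F \<Longrightarrow> of_nat n \<in> F"
  by (induction n) (auto intro: subfieldC_0 subfieldC_1 subfieldC_add)

lemma subfieldC_of_int: "subfieldC F \<Longrightarrow> of_int n \<in> F"
proof -
  assume F: "subfieldC F"
  have "of_int n = (if n \<ge> 0 then of_nat (nat n) else - of_nat (nat (-n)) :: complex)" by auto
  thus ?thesis using F by (auto simp del: of_nat_nat intro: subfieldC_of_nat subfieldC_uminus)
qed

lemma subfieldC_of_rat: "subfieldC F \<Longrightarrow> of_rat r \<in> F"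
proof -
  assume F: "subfieldC F"
  obtain a b where "r = Fract a b" "b > 0" by (cases r) auto
  hence "of_rat r = (of_int a / of_int b :: complex)" by (simp add: of_rat_rat)
  thus ?thesis using F by (simp add: subfieldC_divide subfieldC_of_int)
qed

definition Fpoly :: "complex set \<Rightarrow> complex poly \<Rightarrow> bool" where
  "Fpoly F p \<longleftrightarrow> (\<forall>i. coeff p i \<in> F)"

context fixes F assumes F: "subfieldC F"
begin

lemma Fpoly_0: "Fpoly F 0" using F by (simp add: Fpoly_def subfieldC_0)

lemma Fpoly_const: "c \<in> F \<Longrightarrow> Fpoly F [:c:]"
  using F by (simp add: Fpoly_def coeff_pCons subfieldC_0 split: nat.split)

lemma Fpoly_pCons: "c \<in> F \<Longrightarrow> Fpoly F p \<Longrightarrow> Fpoly F (pCons c p)"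
  by (simp add: Fpoly_def coeff_pCons split: nat.split)

lemma Fpoly_monom: "c \<in> F \<Longrightarrow> Fpoly F (monom c n)"
  using F by (simp add: Fpoly_def coeff_monom subfieldC_0)

lemma Fpoly_add: "Fpoly F p \<Longrightarrow> Fpoly F q \<Longrightarrow> Fpoly F (p + q)"
  using F by (simp add: Fpoly_def subfieldC_add)

lemma Fpoly_uminus: "Fpoly F p \<Longrightarrow> Fpoly F (- p)"
  using F by (simp add: Fpoly_def subfieldC_uminus)

lemma Fpoly_diff: "Fpoly F p \<Longrightarrow> Fpoly F q \<Longrightarrow> Fpoly F (p - q)"
  using F by (simp add: Fpoly_def subfieldC_diff)

lemma Fpoly_smult: "c \<in> F \<Longrightarrow> Fpoly F p \<Longrightarrow> Fpoly F (smult c p)"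
  using F by (simp add: Fpoly_def subfieldC_mult)

lemma Fpoly_mult: "Fpoly F p \<Longrightarrow> Fpoly F q \<Longrightarrow> Fpoly F (p * q)"
  using F by (auto simp: Fpoly_def coeff_mult intro!: subfieldC_sum subfieldC_mult)

lemma Fpoly_1: "Fpoly F 1"
  using Fpoly_const[of 1] F by (simp add: subfieldC_1 one_pCons)

lemma Fpoly_power: "Fpoly F p \<Longrightarrow> Fpoly F (p ^ n)"
  by (induction n) (auto intro: Fpoly_1 Fpoly_mult)

lemma Fpoly_sum: "(\<And>i. i \<in> A \<Longrightarrow> Fpoly F (f i)) \<Longrightarrow> Fpoly F (sum f A)"
  by (induction A rule: infinite_finite_induct) (auto intro: Fpoly_0 Fpoly_add)

lemma Fpoly_pcompose: "Fpoly F p \<Longrightarrow> Fpoly F q \<Longrightarrow> Fpoly F (pcompose p q)"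
proof (induction p)
  case 0 then show ?case by (simp add: Fpoly_0)
next
  case (pCons a p)
  have "a \<in> F" "Fpoly F p" using pCons.prems unfolding Fpoly_def
    by (metis coeff_pCons_0, metis coeff_pCons_Suc)
  thus ?case using pCons by (auto simp: pcompose_pCons intro!: Fpoly_add Fpoly_const Fpoly_mult)
qed

lemma Fpoly_poly: "Fpoly F p \<Longrightarrow> x \<in> F \<Longrightarrow> poly p x \<in> F"
  using F by (auto simp: poly_altdef Fpoly_def intro!: subfieldC_sum subfieldC_mult subfieldC_power)

lemma degree_sub_lead_less:
  fixes p q :: "complex poly"
  assumes "q \<noteq> 0" "degree q \<le> degree p" "p \<noteq> 0"
  defines "t \<equiv> monom (lead_coeff p / lead_coeff q) (degree p - degree q)"
  shows "p - t * q = 0 \<or> degree (p - t * q) < degree p"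
proof -
  have dt: "degree (t * q) = degree p"
    using assms by (simp add: t_def degree_mult_eq degree_monom_eq)
  have lt: "lead_coeff (t * q) = lead_coeff p"
    using assms by (simp add: t_def lead_coeff_mult degree_monom_eq)
  have "degree (p - t * q) \<le> degree p" using dt by (metis degree_diff_le order_refl)
  moreover have "coeff (p - t * q) (degree p) = 0" using lt dt by simp
  ultimately show ?thesis
    by (metis eq_iff_diff_eq_0 le_neq_implies_less leading_coeff_0_iff)
qed

lemma Fpoly_divmod:
  assumes "Fpoly F p" "Fpoly F q"
  shows "Fpoly F (p div q) \<and> Fpoly F (p mod q)"
  using assms
proof (induction "degree p" arbitrary: p rule: less_induct)
  case (less p)
  show ?case
  proof (cases "q = 0 \<or> p = 0 \<or> degree p < degree q")
    case True
    thus ?thesis using less.prems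
      by (auto simp: Fpoly_0 div_poly_less mod_poly_less)
  next
    case False
    hence q0: "q \<noteq> 0" and p0: "p \<noteq> 0" and dq: "degree q \<le> degree p" by auto
    define t where "t = monom (lead_coeff p / lead_coeff q) (degree p - degree q)"
    have lcq: "lead_coeff q \<in> F" "lead_coeff p \<in> F" using less.prems by (auto simp: Fpoly_def)
    have Ft: "Fpoly F t" unfolding t_def
      by (rule Fpoly_monom) (use lcq F in \<open>simp add: subfieldC_divide\<close>)
    define p1 where "p1 = p - t * q"
    have Fp1: "Fpoly F p1" unfolding p1_def using Ft less.prems by (intro Fpoly_diff Fpoly_mult)
    have "p1 = 0 \<or> degree p1 < degree p"
      unfolding p1_def t_def by (rule degree_sub_lead_less) (use q0 dq p0 in auto)
    hence IH: "Fpoly F (p1 div q) \<and> Fpoly F (p1 mod q)"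
      using less.hyps[of p1] Fp1 less.prems by (auto simp: Fpoly_0)
    have pe: "p = p1 + t * q" by (simp add: p1_def)
    have "p div q = t + p1 div q" using q0 pe by simp
    moreover have "p mod q = p1 mod q" using q0 pe by simp
    ultimately show ?thesis using IH Ft by (auto intro: Fpoly_add)
  qed
qed

lemma Fpoly_div: "Fpoly F p \<Longrightarrow> Fpoly F q \<Longrightarrow> Fpoly F (p div q)"
  and Fpoly_mod: "Fpoly F p \<Longrightarrow> Fpoly F q \<Longrightarrow> Fpoly F (p mod q)"
  using Fpoly_divmod by auto

lemma Fbezout:
  assumes "Fpoly F a" "Fpoly F b"
  shows "\<exists>g A B. Fpoly F g \<and> Fpoly F A \<and> Fpoly F B \<and> g = A * a + B * b \<and> g dvd a \<and> g dvd b"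
  using assms
proof (induction "if b = 0 then 0 else Suc (degree b)" arbitrary: a b rule: less_induct)
  case (less b a)
  show ?case
  proof (cases "b = 0")
    case True
    thus ?thesis using less.prems by (intro exI[of _ a] exI[of _ 1] exI[of _ 0]) (auto intro: Fpoly_1 Fpoly_0)
  next
    case False
    have "(if a mod b = 0 then 0 else Suc (degree (a mod b))) < (if b = 0 then 0 else Suc (degree b))"
      using False degree_mod_less'[of b a] by auto
    then obtain g A B where g: "Fpoly F g" "Fpoly F A" "Fpoly F B" "g = A * b + B * (a mod b)"
      "g dvd b" "g dvd a mod b"
      using less.hyps[of "a mod b" b] less.prems Fpoly_mod by blast
    have "g dvd a" using g(5,6) by (metis dvd_mod_iff)
    moreover have "g = B * a + (A - B * (a div b)) * b"
      using g(4) by (simp add: algebra_simps minus_div_mult_eq_mod[symmetric])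
    ultimately show ?thesis using g less.prems
      by (intro exI[of _ g] exI[of _ B] exI[of _ "A - B * (a div b)"])
         (auto intro!: Fpoly_diff Fpoly_mult Fpoly_div)
  qed
qed

end

definition xp :: "nat \<Rightarrow> complex \<Rightarrow> complex poly" where
  "xp n a = monom 1 n - [:a:]"

lemma poly_xp [simp]: "poly (xp n a) x = x ^ n - a"
  by (simp add: xp_def poly_monom)

lemma degree_xp [simp]: "n > 0 \<Longrightarrow> degree (xp n a) = n"
proof -
  assume "n > 0"
  have "xp n a = monom 1 n + [:-a:]" by (simp add: xp_def)
  also have "degree \<dots> = n" using \<open>n > 0\<close> by (subst degree_add_eq_left) (auto simp: degree_monom_eq)
  finally show ?thesis .
qed

lemma xp_nonzero: "n > 0 \<Longrightarrow> xp n a \<noteq> 0"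
  using degree_xp[of n a] by (metis degree_0 less_irrefl_nat)

lemma Fpoly_xp: "subfieldC F \<Longrightarrow> a \<in> F \<Longrightarrow> Fpoly F (xp n a)"
  unfolding xp_def by (intro Fpoly_diff Fpoly_monom Fpoly_const) (auto intro: subfieldC_1)

lemma Fpoly_mono: "F \<subseteq> E \<Longrightarrow> Fpoly F p \<Longrightarrow> Fpoly E p"
  by (auto simp: Fpoly_def)

definition irrF :: "complex set \<Rightarrow> complex poly \<Rightarrow> bool" where
  "irrF F P \<longleftrightarrow> (\<forall>h. Fpoly F h \<longrightarrow> h dvd P \<longrightarrow> degree h = 0 \<or> degree h = degree P)"

lemma dvd_same_degree:
  fixes g P :: "complex poly"
  assumes "g dvd P" "P \<noteq> 0" "degree g = degree P"
  shows "P dvd g"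
proof -
  obtain k where k: "P = g * k" using assms(1) by blast
  have "g \<noteq> 0" "k \<noteq> 0" using k assms(2) by auto
  hence "degree k = 0" using k assms(3) degree_mult_eq[of g k] by simp
  then obtain c where c: "k = [:c:]" by (metis degree_eq_zeroE)
  hence "c \<noteq> 0" using \<open>k \<noteq> 0\<close> by auto
  have "g = P * [:inverse c:]" using k c \<open>c \<noteq> 0\<close>
    by (simp add: mult.assoc mult_ac)
  thus ?thesis by (rule dvdI)
qed

lemma irrF_dvd:
  assumes F: "subfieldC F" and irr: "irrF F P" and P0: "P \<noteq> 0" and FP: "Fpoly F P"
    and FU: "Fpoly F U" and r1: "poly P y = 0" and r2: "poly U y = 0"
  shows "P dvd U"
proof -
  obtain g A B where g: "Fpoly F g" "Fpoly F A" "Fpoly F B" "g = A * P + B * U" "g dvd P" "g dvd U"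
    using Fbezout[OF F FP FU] by blast
  have "g \<noteq> 0" using g(5) P0 by auto
  have gy: "poly g y = 0" using g(4) r1 r2 by simp
  have "degree g \<noteq> 0"
  proof
    assume "degree g = 0"
    then obtain c where "g = [:c:]" by (metis degree_eq_zeroE)
    thus False using gy \<open>g \<noteq> 0\<close> by simp
  qed
  hence "degree g = degree P" using irr g(1,5) by (auto simp: irrF_def)
  hence "P dvd g" using dvd_same_degree g(5) P0 by blast
  thus ?thesis using g(6) by (rule dvd_trans)
qed

lemma has_root_complex:
  fixes p :: "complex poly"
  assumes "degree p > 0" shows "\<exists>x. poly p x = 0"
  using alg_closed_imp_poly_has_root[OF assms] .

lemma prod_mset_uminus:
  "(\<Prod>x\<in>#M. - (x::complex)) = (-1) ^ size M * prod_mset M"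
  by (induction M) auto

lemma poly0_monic_roots:
  fixes h :: "complex poly"
  shows "poly h 0 = lead_coeff h * (-1) ^ degree h * prod_mset (proots h)"
proof -
  have "poly h 0 = poly (smult (lead_coeff h) (\<Prod>x\<in>#proots h. [:-x, 1:])) 0"
    by (subst complex_poly_decompose_multiset) simp
  also have "\<dots> = lead_coeff h * (\<Prod>x\<in>#proots h. - x)"
    by (simp add: poly_prod_mset)
  also have "\<dots> = lead_coeff h * (-1) ^ degree h * prod_mset (proots h)"
    by (simp add: prod_mset_uminus size_proots_complex)
  finally show ?thesis .
qed

lemma prod_proots_in:
  assumes F: "subfieldC F" and Fh: "Fpoly F h" and h0: "h \<noteq> 0"
  shows "prod_mset (proots h) \<in> F"
proof -
  have "prod_mset (proots h) = poly h 0 / (lead_coeff h * (-1) ^ degree h)"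
    using poly0_monic_roots[of h] h0 by (simp add: field_simps)
  also have "\<dots> \<in> F"
    using F Fh by (intro subfieldC_divide subfieldC_mult subfieldC_power Fpoly_poly)
      (auto simp: Fpoly_def subfieldC_0 intro: subfieldC_uminus subfieldC_1)
  finally show ?thesis .
qed

lemma prod_mset_pow_const:
  assumes "\<And>x. x \<in># M \<Longrightarrow> (x::complex) ^ p = a"
  shows "prod_mset M ^ p = a ^ size M"
  using assms by (induction M) (auto simp: power_mult_distrib)

lemma capelli_prime:
  assumes F: "subfieldC F" and p: "prime p" and aF: "a \<in> F" and a0: "a \<noteq> 0"
    and np: "\<not> (\<exists>b\<in>F. b ^ p = a)"
  shows "irrF F (xp p a)"
  unfolding irrF_def
proof (intro allI impI)
  fix h assume Fh: "Fpoly F h" and hd: "h dvd xp p a"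
  have p0: "p > 0" using p prime_gt_0_nat by blast
  have h0: "h \<noteq> 0" using hd xp_nonzero[OF p0] by auto
  have dle: "degree h \<le> p" using dvd_imp_degree_le[OF hd xp_nonzero[OF p0]] p0 by simp
  show "degree h = 0 \<or> degree h = degree (xp p a)"
  proof (rule ccontr)
    assume "\<not> ?thesis"
    hence r0: "degree h > 0" and rp: "degree h < p" using dle p0 by auto
    define r where "r = degree h"
    define c where "c = prod_mset (proots h)"
    have cF: "c \<in> F" unfolding c_def by (rule prod_proots_in[OF F Fh h0])
    have "\<And>x. x \<in># proots h \<Longrightarrow> x ^ p = a"
    proof -
      fix x assume "x \<in># proots h"
      hence "poly h x = 0" using h0 by simp
      hence "poly (xp p a) x = 0" using hd by (metis dvd_def mult_eq_0_iff poly_mult)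
      thus "x ^ p = a" by simp
    qed
    hence cp: "c ^ p = a ^ r" unfolding c_def r_def
      by (subst prod_mset_pow_const[of _ p a]) (auto simp: size_proots_complex)
    have "coprime r p" using r0 rp p unfolding r_def
      by (metis coprime_commute dvd_imp_le not_le prime_imp_coprime)
    then obtain u w where uw: "r * u = p * w + 1"
      using bezout_nat[of r p] r0 unfolding r_def by (auto simp: coprime_iff_gcd_eq_1)
    define b where "b = c ^ u / a ^ w"
    have "b \<in> F" unfolding b_def using F cF aF by (intro subfieldC_divide subfieldC_power)
    moreover have "b ^ p = a"
    proof -
      have "b ^ p = (c ^ p) ^ u / (a ^ p) ^ w"
        by (simp add: b_def power_divide power_mult[symmetric] mult.commute)
      also have "\<dots> = a ^ (r * u) / a ^ (p * w)" by (simp add: cp power_mult)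
      also have "\<dots> = a" using a0 by (simp add: uw)
      finally show ?thesis .
    qed
    ultimately show False using np by blast
  qed
qed

lemma rsquarefree_xp:
  assumes "k > 0" "a \<noteq> 0" shows "rsquarefree (xp k a)"
proof -
  have d: "pderiv (xp k a) = monom (of_nat k) (k - 1)"
    by (simp add: xp_def pderiv_diff pderiv_monom pderiv_pCons)
  show ?thesis unfolding rsquarefree_roots
  proof (intro allI notI)
    fix w assume "poly (xp k a) w = 0 \<and> poly (pderiv (xp k a)) w = 0"
    hence "w ^ k = a" "of_nat k * w ^ (k - 1) = 0" by (auto simp: d poly_monom)
    thus False using assms by (auto simp: power_0_left)
  qed
qed

lemma lead_coeff_xp: "k > 0 \<Longrightarrow> lead_coeff (xp k a) = 1"
  using degree_xp[of k a] by (simp add: xp_def) (cases k; simp)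

lemma prod_nth_roots:
  assumes "k > 0" "a \<noteq> 0" "odd k"
  shows "\<Prod>{z::complex. z ^ k = a} = a"
proof -
  have "xp k a = smult (lead_coeff (xp k a)) (\<Prod>z|poly (xp k a) z = 0. [:-z, 1:])"
    using complex_poly_decompose_rsquarefree[OF rsquarefree_xp[OF assms(1,2)]] by simp
  hence "poly (xp k a) 0 = (\<Prod>z|z ^ k = a. - z)"
    using lead_coeff_xp[OF assms(1)] by (simp add: poly_prod)
  hence "- a = (-1) ^ k * \<Prod>{z. z ^ k = a}"
    using assms(1) by (simp add: prod_uminus card_nth_roots[OF assms(2,1)] power_0_left)
  thus ?thesis using assms(3) by simp
qed

definition ext :: "complex set \<Rightarrow> complex \<Rightarrow> complex set" where
  "ext F y = {poly Q y | Q. Fpoly F Q}"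

locale capctx =
  fixes F p a y
  assumes F: "subfieldC F" and p: "prime p" and aF: "a \<in> F" and a0: "a \<noteq> 0"
    and ya: "y ^ p = a" and irr: "irrF F (xp p a)"
begin

lemma p0: "p > 0" using p prime_gt_0_nat by blast

lemma P0: "xp p a \<noteq> 0" using xp_nonzero[OF p0] .

lemma FP: "Fpoly F (xp p a)" using Fpoly_xp[OF F aF] .

lemma conj_root:
  assumes "Fpoly F U" "poly U y = 0" "z ^ p = a"
  shows "poly U z = 0"
proof -
  have "xp p a dvd U" using irrF_dvd[OF F irr P0 FP assms(1)] ya assms(2) by simp
  then obtain k where "U = xp p a * k" by blast
  thus ?thesis using assms(3) by simp
qed

lemma ext_subfield: "subfieldC (ext F y)"
proof -
  have c: "poly [:c:] y \<in> ext F y" if "c \<in> F" for c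
    unfolding ext_def using Fpoly_const[OF F that] by blast
  have z: "0 \<in> ext F y" using c[of 0] F by (simp add: subfieldC_0)
  have o: "1 \<in> ext F y" using c[of 1] F by (simp add: subfieldC_1)
  have ad: "u + v \<in> ext F y \<and> u * v \<in> ext F y" if uv: "u \<in> ext F y" "v \<in> ext F y" for u v
  proof -
    obtain Q1 where q1: "Fpoly F Q1" "u = poly Q1 y" using uv(1) unfolding ext_def by blast
    obtain Q2 where q2: "Fpoly F Q2" "v = poly Q2 y" using uv(2) unfolding ext_def by blast
    have "u + v = poly (Q1 + Q2) y" "u * v = poly (Q1 * Q2) y" using q1 q2 by auto
    moreover have "Fpoly F (Q1 + Q2)" "Fpoly F (Q1 * Q2)"
      using q1 q2 by (auto intro: Fpoly_add[OF F] Fpoly_mult[OF F])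
    ultimately show ?thesis unfolding ext_def by blast
  qed
  have um: "- u \<in> ext F y" if uu: "u \<in> ext F y" for u
  proof -
    obtain Q1 where "Fpoly F Q1" "u = poly Q1 y" using uu unfolding ext_def by blast
    thus ?thesis unfolding ext_def by (auto intro!: exI[of _ "- Q1"] Fpoly_uminus[OF F])
  qed
  have inv: "inverse u \<in> ext F y" if uu: "u \<in> ext F y" for u
  proof (cases "u = 0")
    case True thus ?thesis using z by simp
  next
    case False
    obtain Q where Q: "Fpoly F Q" "u = poly Q y" using uu unfolding ext_def by blast
    obtain g A B where g: "Fpoly F g" "Fpoly F A" "Fpoly F B" "g = A * xp p a + B * Q"
      "g dvd xp p a" "g dvd Q"
      using Fbezout[OF F FP Q(1)] by blast
    have g0: "g \<noteq> 0" using g(5) P0 by auto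
    have "degree g = 0"
    proof (rule ccontr)
      assume "degree g \<noteq> 0"
      hence "degree g = degree (xp p a)" using irr g(1,5) by (auto simp: irrF_def)
      hence "xp p a dvd g" using dvd_same_degree g(5) P0 by blast
      hence "xp p a dvd Q" using g(6) by (rule dvd_trans)
      then obtain k where "Q = xp p a * k" by blast
      hence "u = 0" using Q(2) ya by simp
      thus False using False by simp
    qed
    then obtain cc where cc: "g = [:cc:]" by (metis degree_eq_zeroE)
    have cc0: "cc \<noteq> 0" using g0 cc by simp
    have ccF: "cc \<in> F" using g(1) cc unfolding Fpoly_def by (metis coeff_pCons_0)
    have "poly g y = poly A y * poly (xp p a) y + poly B y * poly Q y" using g(4) by simp
    hence "cc = poly B y * u" using cc ya Q(2) by simp
    hence "inverse u = poly (smult (inverse cc) B) y" using cc0 False by (simp add: field_simps)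
    moreover have "Fpoly F (smult (inverse cc) B)"
      using ccF g(3) F by (intro Fpoly_smult subfieldC_inverse)
    ultimately show ?thesis unfolding ext_def by blast
  qed
  show ?thesis unfolding subfieldC_def using z o ad um inv by blast
qed

lemma F_sub_ext: "F \<subseteq> ext F y"
proof
  fix c assume "c \<in> F"
  thus "c \<in> ext F y" unfolding ext_def using Fpoly_const[OF F, of c] by (intro CollectI exI[of _ "[:c:]"]) simp
qed

lemma y_ext: "y \<in> ext F y"
  unfolding ext_def using Fpoly_pCons[OF F subfieldC_0[OF F] Fpoly_1[OF F]]
  by (intro CollectI exI[of _ "[:0,1:]"]) (simp add: one_pCons)

end

context capctx
begin

lemma dvd_root: "g dvd P \<Longrightarrow> poly g w = 0 \<Longrightarrow> poly P w = 0"
  by (auto elim!: dvdE)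

lemma no_root_in_ext:
  assumes q: "prime q" and podd: "odd p" and zE: "z \<in> ext F y" and zq: "z ^ q = y"
  shows "\<exists>N\<in>F. N ^ q = a"
proof -
  obtain Q where Q: "Fpoly F Q" "z = poly Q y" using zE unfolding ext_def by blast
  have q0: "q > 0" using q prime_gt_0_nat by blast
  define Rt where "Rt = {w::complex. w ^ p = a}"
  have Qr: "poly Q w ^ q = w" if "w \<in> Rt" for w
  proof -
    have "Fpoly F (Q ^ q - [:0,1:])"
      using Q(1) F by (intro Fpoly_diff Fpoly_power Fpoly_pCons Fpoly_1) (auto intro: subfieldC_0 subfieldC_1 Fpoly_0)
    moreover have "poly (Q ^ q - [:0,1:]) y = 0" using Q zq by simp
    ultimately have "poly (Q ^ q - [:0,1:]) w = 0" using conj_root that unfolding Rt_def by blast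
    thus ?thesis by simp
  qed
  define Mb where "Mb = xp (p * q) a"
  define V where "V = [:0,1:] - pcompose Q (monom 1 q)"
  have FMb: "Fpoly F Mb" unfolding Mb_def using Fpoly_xp[OF F aF] .
  have FV: "Fpoly F V" unfolding V_def using F Q(1)
    by (intro Fpoly_diff Fpoly_pcompose Fpoly_pCons Fpoly_1 Fpoly_monom) (auto intro: subfieldC_0 subfieldC_1 Fpoly_0)
  have pq0: "p * q > 0" using p0 q0 by simp
  have Mb0: "Mb \<noteq> 0" unfolding Mb_def using xp_nonzero[OF pq0] .
  obtain g A B where g: "Fpoly F g" "Fpoly F A" "Fpoly F B" "g = A * Mb + B * V" "g dvd Mb" "g dvd V"
    using Fbezout[OF F FMb FV] by blast
  have g0: "g \<noteq> 0" using g(5) Mb0 by auto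
  have roots: "{w. poly g w = 0} = poly Q ` Rt"
  proof (intro equalityI subsetI)
    fix w assume "w \<in> {w. poly g w = 0}"
    hence "poly Mb w = 0" "poly V w = 0" using g(5,6) dvd_root by auto
    hence "w ^ (p * q) = a" "w = poly Q (w ^ q)"
      by (simp_all add: Mb_def V_def poly_pcompose poly_monom)
    hence "(w ^ q) ^ p = a" "w = poly Q (w ^ q)" by (simp_all add: power_mult[symmetric] mult.commute)
    thus "w \<in> poly Q ` Rt" unfolding Rt_def by blast
  next
    fix w assume "w \<in> poly Q ` Rt"
    then obtain w' where w': "w' \<in> Rt" "w = poly Q w'" by blast
    have "w ^ q = w'" using Qr w' by simp
    have "w ^ (p * q) = (w ^ q) ^ p" by (simp add: power_mult[symmetric] mult.commute)
    hence "poly Mb w = 0" "poly V w = 0" using w' \<open>w ^ q = w'\<close> unfolding Rt_def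
      by (simp_all add: Mb_def V_def poly_pcompose poly_monom)
    thus "w \<in> {w. poly g w = 0}" using g(4) by simp
  qed
  have rsq: "rsquarefree g"
  proof -
    have rM: "rsquarefree Mb" unfolding Mb_def using rsquarefree_xp[OF pq0 a0] .
    obtain k where k: "Mb = g * k" using g(5) by blast
    show ?thesis unfolding rsquarefree_def
    proof (intro conjI allI g0)
      fix x
      have "order x Mb = order x g + order x k" using k Mb0 order_mult[of g k x] by simp
      moreover have "order x Mb = 0 \<or> order x Mb = 1" using rM by (simp add: rsquarefree_def)
      ultimately show "order x g = 0 \<or> order x g = 1" by auto
    qed
  qed
  have inj: "inj_on (poly Q) Rt"
  proof (rule inj_onI)
    fix u v assume "u \<in> Rt" "v \<in> Rt" "poly Q u = poly Q v"
    hence "poly Q u ^ q = poly Q v ^ q" by simp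
    thus "u = v" using Qr[OF \<open>u \<in> Rt\<close>] Qr[OF \<open>v \<in> Rt\<close>] by simp
  qed
  have finRt: "finite Rt" unfolding Rt_def using finite_nth_roots[OF p0] .
  have cardR: "card (poly Q ` Rt) = p"
    using card_image[OF inj] card_nth_roots[OF a0 p0] by (simp add: Rt_def)
  have "g = smult (lead_coeff g) (\<Prod>z|poly g z = 0. [:-z, 1:])"
    using complex_poly_decompose_rsquarefree[OF rsq] by simp
  hence "poly g 0 = poly (smult (lead_coeff g) (\<Prod>z|poly g z = 0. [:-z, 1:])) 0" by simp
  also have "\<dots> = lead_coeff g * (\<Prod>z|poly g z = 0. - z)" by (simp add: poly_prod)
  finally have "poly g 0 = lead_coeff g * (\<Prod>z\<in>poly Q ` Rt. - z)" by (simp only: roots)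
  hence pg: "poly g 0 = lead_coeff g * (-1) ^ p * (\<Prod>z\<in>poly Q ` Rt. z)"
    by (simp add: prod_uminus cardR)
  define N where "N = (\<Prod>w\<in>Rt. poly Q w)"
  have NN: "N = (\<Prod>z\<in>poly Q ` Rt. z)" unfolding N_def using prod.reindex[OF inj, of id] by simp
  have lc0: "lead_coeff g \<noteq> 0" using g0 by simp
  have "N = poly g 0 / (lead_coeff g * (-1) ^ p)" using pg lc0 NN by (simp add: field_simps)
  moreover have "poly g 0 \<in> F" using Fpoly_poly[OF F g(1) subfieldC_0[OF F]] .
  moreover have "lead_coeff g \<in> F" using g(1) by (simp add: Fpoly_def)
  moreover have "(-1::complex) ^ p \<in> F" using F by (intro subfieldC_power subfieldC_uminus subfieldC_1)
  ultimately have NF: "N \<in> F" using F by (simp add: subfieldC_divide subfieldC_mult)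
  have "N ^ q = (\<Prod>w\<in>Rt. poly Q w ^ q)" unfolding N_def by (rule prod_power_distrib)
  also have "\<dots> = (\<Prod>w\<in>Rt. w)" using Qr by (intro prod.cong) auto
  also have "\<dots> = a" unfolding Rt_def using prod_nth_roots[OF p0 a0 podd] by simp
  finally show ?thesis using NF by blast
qed

lemma coeff_xp_mult:
  "coeff (xp m c * V) i = (if i < m then 0 else coeff V (i - m)) - c * coeff V i"
proof -
  have "xp m c * V = monom 1 m * V - smult c V" by (simp add: xp_def algebra_simps)
  thus ?thesis by (simp add: coeff_monom_mult)
qed

lemma conj_dvd:
  assumes Fh: "Fpoly F h" and dv: "xp m y dvd h" and za: "z ^ p = a" and m0: "m > 0"
  shows "xp m z dvd h"
proof -
  define E where "E = ext F y"
  have E: "subfieldC E" unfolding E_def using ext_subfield .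
  define W where "W = h div xp m y"
  have hW: "h = xp m y * W" unfolding W_def using dv by simp
  have FW: "Fpoly E W" unfolding W_def
    using Fpoly_div[OF E Fpoly_mono[OF F_sub_ext[folded E_def] Fh] Fpoly_xp[OF E y_ext[folded E_def]]] by (simp add: E_def)
  have "\<forall>i. \<exists>Q. Fpoly F Q \<and> poly Q y = coeff W i \<and> (coeff W i = 0 \<longrightarrow> Q = 0)"
  proof
    fix i
    show "\<exists>Q. Fpoly F Q \<and> poly Q y = coeff W i \<and> (coeff W i = 0 \<longrightarrow> Q = 0)"
    proof (cases "coeff W i = 0")
      case True thus ?thesis using Fpoly_0[OF F] by auto
    next
      case False
      have "coeff W i \<in> E" using FW by (simp add: Fpoly_def)
      then obtain Q where "Fpoly F Q" "poly Q y = coeff W i" unfolding E_def ext_def by fastforce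
      thus ?thesis using False by auto
    qed
  qed
  then obtain Qs where Qs: "\<And>i. Fpoly F (Qs i)" "\<And>i. poly (Qs i) y = coeff W i"
    "\<And>i. coeff W i = 0 \<Longrightarrow> Qs i = 0"
    by metis
  define W' where "W' = (\<Sum>i\<le>degree W. monom (poly (Qs i) z) i)"
  have cW': "coeff W' j = poly (Qs j) z" for j
  proof (cases "j \<le> degree W")
    case True
    thus ?thesis unfolding W'_def by (simp add: coeff_sum coeff_monom)
  next
    case False
    hence "coeff W j = 0" by (simp add: coeff_eq_0)
    hence "Qs j = 0" using Qs(3) by blast
    thus ?thesis using False unfolding W'_def by (simp add: coeff_sum coeff_monom)
  qed
  have "h = xp m z * W'"
  proof (rule poly_eqI)
    fix i
    define Ci where "Ci = [:coeff h i:] - (if i < m then 0 else Qs (i - m)) + [:0,1:] * Qs i"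
    have "coeff h i \<in> F" using Fh by (simp add: Fpoly_def)
    hence FC: "Fpoly F Ci" unfolding Ci_def using F Fh Qs(1) Fpoly_0[OF F]
      by (intro Fpoly_add Fpoly_diff Fpoly_const Fpoly_mult Fpoly_pCons Fpoly_1 subfieldC_0) (auto intro: subfieldC_1)
    have "poly Ci y = coeff h i - coeff (xp m y * W) i"
      unfolding Ci_def coeff_xp_mult by (simp add: Qs(2))
    hence "poly Ci y = 0" using hW by simp
    hence "poly Ci z = 0" using conj_root FC za by blast
    thus "coeff h i = coeff (xp m z * W') i"
      unfolding Ci_def coeff_xp_mult by (cases "i < m") (simp_all add: cW' algebra_simps eq_neg_iff_add_eq_0 eq_diff_eq)
  qed
  thus ?thesis by (rule dvdI)
qed

end

theorem capelli:
  assumes "subfieldC F" "odd n" "a \<in> F" "a \<noteq> 0"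
    "\<forall>q. prime q \<and> q dvd n \<longrightarrow> \<not> (\<exists>b\<in>F. b ^ q = a)"
  shows "irrF F (xp n a)"
  using assms
proof (induction n arbitrary: F a rule: less_induct)
  case (less n F a)
  note F = less.prems(1)
  have n0: "n > 0" using less.prems(2) by (cases n) auto
  show ?case unfolding irrF_def
  proof (intro allI impI)
    fix h assume Fh: "Fpoly F h" and hd: "h dvd xp n a"
    have h0: "h \<noteq> 0" using hd xp_nonzero[OF n0] by auto
    have dle: "degree h \<le> n" using dvd_imp_degree_le[OF hd xp_nonzero[OF n0]] n0 by simp
    show "degree h = 0 \<or> degree h = degree (xp n a)"
    proof (cases "degree h = 0")
      case True thus ?thesis by simp
    next
      case False
      show ?thesis
      proof (cases "n = 1")
        case True thus ?thesis using dle False by simp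
      next
        case n1: False
        obtain p where p: "prime p" "p dvd n" using prime_factor_nat[OF n1] by blast
        define m where "m = n div p"
        have nm: "n = p * m" using p(2) unfolding m_def by simp
        have p2: "p \<ge> 2" using p(1) prime_ge_2_nat by blast
        have m0: "m > 0" using nm n0 by (cases m) auto
        have mn: "m < n" using nm p2 m0 by (simp add: less_le_trans[of m "2*m" "p*m"])
        have modd: "odd m" "odd p" using nm less.prems(2) by auto
        obtain v where v: "poly h v = 0" using has_root_complex False by blast
        have vn: "v ^ n = a" using v hd by (metis dvd_def mult_eq_0_iff poly_mult poly_xp right_minus_eq)
        define y where "y = v ^ m"
        have ya: "y ^ p = a" unfolding y_def using vn nm by (simp add: power_mult[symmetric] mult.commute)
        have irrp: "irrF F (xp p a)"
          using capelli_prime[OF F p(1) less.prems(3,4)] less.prems(5) p by blast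
        interpret c: capctx F p a y
          by unfold_locales (use F p less.prems ya irrp in auto)
        define E where "E = ext F y"
        have E: "subfieldC E" unfolding E_def by (rule c.ext_subfield)
        have y0: "y \<noteq> 0" using ya less.prems(4) p2 by auto
        have noroot: "\<forall>q. prime q \<and> q dvd m \<longrightarrow> \<not> (\<exists>b\<in>E. b ^ q = y)"
        proof (intro allI impI notI)
          fix q assume q: "prime q \<and> q dvd m" and "\<exists>b\<in>E. b ^ q = y"
          then obtain b where "b \<in> E" "b ^ q = y" by blast
          then obtain N where "N \<in> F" "N ^ q = a"
            using c.no_root_in_ext[of q b] q modd(2) unfolding E_def by blast
          moreover have "q dvd n" using q nm by simp
          ultimately show False using less.prems(5) q by blast
        qed
        have irrm: "irrF E (xp m y)"
          using less.IH[OF mn E modd(1) _ y0 noroot] c.y_ext unfolding E_def by blast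
        have FhE: "Fpoly E h" using Fpoly_mono[OF c.F_sub_ext Fh] unfolding E_def .
        have "xp m y dvd h"
          using irrF_dvd[OF E irrm xp_nonzero[OF m0] Fpoly_xp[OF E c.y_ext[folded E_def]] FhE]
            v by (simp add: y_def)
        hence alld: "xp m z dvd h" if "z ^ p = a" for z
          using c.conj_dvd[OF Fh _ that m0] by blast
        have sub: "{w. w ^ n = a} \<subseteq> {w. poly h w = 0}"
        proof
          fix w assume "w \<in> {w. w ^ n = a}"
          hence "(w ^ m) ^ p = a" using nm by (simp add: power_mult[symmetric] mult.commute)
          then obtain k where "h = xp m (w ^ m) * k" using alld by blast
          thus "w \<in> {w. poly h w = 0}" by simp
        qed
        have "n = card {w. w ^ n = a}" using card_nth_roots[OF less.prems(4) n0] by simp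
        also have "\<dots> \<le> card {w. poly h w = 0}"
          using sub poly_roots_finite[OF h0] by (rule card_mono[rotated])
        also have "\<dots> \<le> degree h" using card_poly_roots_bound[OF h0] .
        finally show ?thesis using dle n0 by simp
      qed
    qed
  qed
qed

definition rc :: "rat poly \<Rightarrow> complex poly" where
  "rc p = map_poly of_rat p"

lemma coeff_rc [simp]: "coeff (rc p) i = of_rat (coeff p i)"
  by (simp add: rc_def coeff_map_poly)

lemma rc_eq_iff [simp]: "rc p = rc q \<longleftrightarrow> p = q"
  by (auto simp: poly_eq_iff)

lemma rc_add [simp]: "rc (p + q) = rc p + rc q"
  by (rule poly_eqI) (simp add: of_rat_add)
lemma rc_diff [simp]: "rc (p - q) = rc p - rc q"
  by (rule poly_eqI) (simp add: of_rat_diff)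
lemma rc_uminus [simp]: "rc (- p) = - rc p"
  by (rule poly_eqI) (simp add: of_rat_minus)
lemma rc_smult [simp]: "rc (smult c p) = smult (of_rat c) (rc p)"
  by (rule poly_eqI) (simp add: of_rat_mult)
lemma rc_mult [simp]: "rc (p * q) = rc p * rc q"
  by (rule poly_eqI) (simp add: coeff_mult of_rat_sum of_rat_mult)
lemma rc_pCons [simp]: "rc (pCons a p) = pCons (of_rat a) (rc p)"
  by (rule poly_eqI) (simp add: coeff_pCons split: nat.split)
lemma rc_0 [simp]: "rc 0 = 0" by (simp add: rc_def)
lemma rc_1 [simp]: "rc 1 = 1" by (simp add: rc_def)
lemma rc_monom [simp]: "rc (monom c n) = monom (of_rat c) n"
  by (simp add: rc_def map_poly_monom)
lemma rc_power [simp]: "rc (p ^ n) = rc p ^ n"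
  by (induction n) auto
lemma rc_sum: "rc (sum f A) = (\<Sum>x\<in>A. rc (f x))"
  by (induction A rule: infinite_finite_induct) auto
lemma rc_pcompose [simp]: "rc (pcompose p q) = pcompose (rc p) (rc q)"
  by (induction p) (auto simp: pcompose_pCons)
lemma degree_rc [simp]: "degree (rc p) = degree p"
  by (simp add: rc_def degree_map_poly)
lemma poly_rc_of_rat: "poly (rc p) (of_rat x) = of_rat (poly p x)"
  by (induction p) (auto simp: of_rat_add of_rat_mult)
lemma rc_dvd: "p dvd q \<Longrightarrow> rc p dvd rc q"
  by (auto elim!: dvdE)

fun dick :: "nat \<Rightarrow> 'a::comm_ring_1 \<Rightarrow> 'a poly" where
  "dick 0 c = [:2:]"
| "dick (Suc 0) c = [:0, 1:]"
| "dick (Suc (Suc n)) c = [:0, 1:] * dick (Suc n) c - smult c (dick n c)"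

lemma poly_dick:
  fixes u c :: "'a::field"
  assumes "u \<noteq> 0"
  shows "poly (dick n c) (u + c / u) = u ^ n + (c / u) ^ n"
proof (induction n c rule: dick.induct)
  case (3 n c)
  define w where "w = c / u"
  have c: "c = u * w" using assms by (simp add: w_def)
  show ?case using 3 unfolding w_def[symmetric]
    by (simp add: c algebra_simps)
qed simp_all

lemma rc_dick [simp]: "rc (dick n c) = dick n (of_rat c)"
  by (induction n c rule: dick.induct) (simp_all add: one_pCons)

lemma dick_degree_lead:
  "n \<ge> 1 \<Longrightarrow> degree (dick n (c::'a::idom)) = n \<and> coeff (dick n c) n = 1"
proof (induction n c rule: dick.induct)
  case (3 n c)
  show ?case
  proof (cases n)
    case 0 thus ?thesis
      by (simp add: numeral_2_eq_2 degree_add_eq_left one_pCons)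
  next
    case (Suc k)
    hence IH: "degree (dick (Suc n) c) = Suc n" "coeff (dick (Suc n) c) (Suc n) = 1"
      "degree (dick n c) = n" using 3 by auto
    have e: "dick (Suc (Suc n)) c = pCons 0 (dick (Suc n) c) + (- smult c (dick n c))" by simp
    have nz: "dick (Suc n) c \<noteq> 0" using IH(2) by auto
    have d1: "degree (pCons 0 (dick (Suc n) c)) = Suc (Suc n)" using nz IH(1) by simp
    have "degree (- smult c (dick n c)) \<le> n" using degree_smult_le[of c "dick n c"] IH(3) by simp
    hence dl: "degree (- smult c (dick n c)) < degree (pCons 0 (dick (Suc n) c))" using d1 by simp
    have "degree (dick (Suc (Suc n)) c) = Suc (Suc n)"
      unfolding e using d1 dl by (subst degree_add_eq_left) auto
    moreover have "coeff (dick (Suc (Suc n)) c) (Suc (Suc n)) = 1"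
      using IH by (simp add: coeff_eq_0)
    ultimately show ?thesis by simp
  qed
qed auto

definition cf :: "nat \<Rightarrow> nat \<Rightarrow> nat" where
  "cf n j = (if j = 0 then 1 else (n - j choose j) + (n - j - 1 choose (j - 1)))"

lemma cf_rec:
  assumes "2 * Suc j \<le> n + 1"
  shows "cf (n + 2) (Suc j) = cf (n + 1) (Suc j) + cf n j"
proof (cases j)
  case 0
  thus ?thesis using assms by (simp add: cf_def)
next
  case (Suc k)
  obtain t where t: "n = t + k + 2" using assms Suc by (metis add.commute add_2_eq_Suc' le_Suc_ex le_add2 less_Suc_eq_le
        mult_2 not_less_eq_eq plus_1_eq_Suc add_Suc le_trans)
  show ?thesis unfolding cf_def using Suc t by (simp add: numeral_2_eq_2)
qed

lemma cf_even: "m \<ge> 1 \<Longrightarrow> cf (2 * m + 2) (Suc m) = cf (2 * m) m"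
  by (cases m) (simp_all add: cf_def)

definition dc :: "nat \<Rightarrow> 'a::comm_ring_1 \<Rightarrow> nat \<Rightarrow> 'a" where
  "dc n c i = (if i \<le> n \<and> even (n - i) then (-1) ^ ((n - i) div 2) * of_nat (cf n ((n - i) div 2)) * c ^ ((n - i) div 2) else 0)"

lemma coeff_dick: "n \<ge> 1 \<Longrightarrow> coeff (dick n c) i = dc n c i"
proof (induction n c arbitrary: i rule: dick.induct)
  case (2 c)
  show ?case by (cases i) (auto simp: dc_def cf_def coeff_pCons split: nat.split)
next
  case (3 n c)
  show ?case
  proof (cases "n = 0")
    case True
    thus ?thesis
      by (cases i) (auto simp: dc_def cf_def coeff_pCons numeral_2_eq_2 split: nat.split)
  next
    case False
    hence IH1: "\<And>i. coeff (dick (Suc n) c) i = dc (Suc n) c i"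
      and IH2: "\<And>i. coeff (dick n c) i = dc n c i" using 3 by auto
    have ce: "coeff (dick (Suc (Suc n)) c) i =
        (case i of 0 \<Rightarrow> 0 | Suc i' \<Rightarrow> coeff (dick (Suc n) c) i') - c * coeff (dick n c) i"
      by (simp add: coeff_pCons)
    show ?thesis
    proof (cases i)
      case 0
      show ?thesis
      proof (cases "even n")
        case True
        then obtain m where m: "n = 2 * m" by blast
        have m1: "m \<ge> 1" using False m by simp
        have "coeff (dick (Suc (Suc n)) c) i = - c * ((-1) ^ m * of_nat (cf (2 * m) m) * c ^ m)"
          using ce 0 IH2 m by (simp add: dc_def)
        also have "\<dots> = (-1) ^ Suc m * of_nat (cf (2 * m + 2) (Suc m)) * c ^ Suc m"
          using cf_even[OF m1] by (simp add: algebra_simps)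
        also have "\<dots> = dc (Suc (Suc n)) c i" using 0 m by (simp add: dc_def)
        finally show ?thesis .
      next
        case odd: False
        thus ?thesis using ce 0 IH2 by (simp add: dc_def)
      qed
    next
      case (Suc i')
      have ce2: "coeff (dick (Suc (Suc n)) c) i = dc (Suc n) c i' - c * dc n c (Suc i')"
        using ce Suc IH1 IH2 by simp
      show ?thesis
      proof (cases "i' \<le> Suc n \<and> even (Suc n - i')")
        case False
        hence n2: "\<not> (Suc i' \<le> n \<and> even (n - Suc i'))" by auto
        have z1: "dc (Suc n) c i' = 0" unfolding dc_def using False by (intro if_not_P)
        have z2: "dc n c (Suc i') = 0" unfolding dc_def using n2 by (intro if_not_P)
        have z3: "dc (Suc (Suc n)) c i = 0" unfolding dc_def Suc using False by (intro if_not_P) simp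
        show ?thesis using ce2 z1 z2 z3 by simp
      next
        case True
        show ?thesis
        proof (cases "i' = Suc n")
          case True
          thus ?thesis using ce2 Suc by (simp add: dc_def cf_def)
        next
          case False
          have ev: "even (Suc n - i')" using True by blast
          then obtain k where k: "Suc n - i' = 2 * k" by (rule evenE)
          have "k \<noteq> 0" using k False True by auto
          then obtain j0 where "k = Suc j0" using not0_implies_Suc by blast
          hence j0: "Suc n - i' = 2 * Suc j0" using k by simp
          have e1: "(Suc n - i') div 2 = Suc j0" using j0 by simp
          have e3: "(Suc (Suc n) - Suc i') div 2 = Suc j0" using j0 by simp
          have "n - Suc i' = 2 * j0" using j0 by arith
          moreover have "Suc i' \<le> n" using j0 by arith
          ultimately have c1: "Suc i' \<le> n \<and> even (n - Suc i')" by simp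
          have e2: "(n - Suc i') div 2 = j0" using j0 by (simp add: \<open>n - Suc i' = 2 * j0\<close>)
          have c3: "Suc i' \<le> Suc (Suc n) \<and> even (Suc (Suc n) - Suc i')"
            using True ev by (simp only: diff_Suc_Suc Suc_le_mono)
          have rec: "cf (n + 2) (Suc j0) = cf (n + 1) (Suc j0) + cf n j0"
            using j0 by (intro cf_rec) simp
          have "coeff (dick (Suc (Suc n)) c) i =
              (-1) ^ Suc j0 * of_nat (cf (Suc n) (Suc j0)) * c ^ Suc j0 -
              c * ((-1) ^ j0 * of_nat (cf n j0) * c ^ j0)"
            using ce2 True c1 e1 e2 by (simp add: dc_def)
          also have "\<dots> = (-1) ^ Suc j0 * of_nat (cf (Suc (Suc n)) (Suc j0)) * c ^ Suc j0"
            using rec by (simp add: algebra_simps)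
          also have "\<dots> = dc (Suc (Suc n)) c (Suc i')" unfolding dc_def
            by (subst if_P[OF c3]) (simp only: e3)
          also have "\<dots> = dc (Suc (Suc n)) c i" using Suc by simp
          finally show ?thesis .
        qed
      qed
    qed
  qed
qed simp_all

lemma cf_rat:
  assumes "j < n"
  shows "(of_nat n / of_nat (n - j) * of_nat ((n - j) choose j) :: rat) = of_nat (cf n j)"
proof (cases "j = 0")
  case True thus ?thesis using assms by (simp add: cf_def)
next
  case False
  have "Suc (n - j - 1) * (n - j - 1 choose (j - 1)) = (Suc (n - j - 1) choose Suc (j - 1)) * Suc (j - 1)"
    by (rule Suc_times_binomial_eq)
  hence e: "(n - j) * (n - j - 1 choose (j - 1)) = (n - j choose j) * j"
    using False assms by (simp add: Suc_diff_Suc)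
  have "(n - j) * cf n j = n * (n - j choose j)"
    using False assms e by (simp add: cf_def algebra_simps)
  hence "(of_nat (n - j) :: rat) * of_nat (cf n j) = of_nat n * of_nat (n - j choose j)"
    by (metis of_nat_mult)
  moreover have "(of_nat (n - j) :: rat) \<noteq> 0" using assms by simp
  ultimately show ?thesis by (simp add: field_simps)
qed

lemma fpoly_dick:
  assumes "odd n"
  shows "fpoly n d R = dick n (d\<^sup>2 - R) - [: 2 * d * (d\<^sup>2 - R) ^ ((n - 1) div 2) :]"
proof -
  define D where "D = d\<^sup>2 - R"
  define k where "k = (n - 1) div 2"
  have n0: "n \<ge> 1" using assms by (cases n) auto
  have nk: "n = 2 * k + 1" using assms unfolding k_def by presburger
  define co where "co j = (-1)^j * (of_nat n / of_nat (n - j)) * of_nat ((n - j) choose j) * D^j" for j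
  have co: "co j = (-1) ^ j * of_nat (cf n j) * D ^ j" if "j \<le> k" for j
  proof -
    have jn: "j < n" using that nk by simp
    have "co j = (-1)^j * (of_nat n / of_nat (n - j) * of_nat ((n-j) choose j)) * D^j"
      unfolding co_def by (simp only: mult.assoc)
    also have "\<dots> = (-1) ^ j * of_nat (cf n j) * D ^ j" by (simp only: cf_rat[OF jn])
    finally show ?thesis .
  qed
  have cs: "coeff (\<Sum>j\<in>{0..k}. monom (co j) (n - 2 * j)) i = dc n D i" for i
  proof -
    have "coeff (\<Sum>j\<in>{0..k}. monom (co j) (n - 2 * j)) i = (\<Sum>j\<in>{0..k}. if n - 2 * j = i then co j else 0)"
      by (simp add: coeff_sum coeff_monom)
    also have "\<dots> = (\<Sum>j\<in>{0..k}. if j = (n - i) div 2 then (if i \<le> n \<and> even (n - i) then co j else 0) else 0)"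
    proof (intro sum.cong refl)
      fix j assume "j \<in> {0..k}"
      hence "2 * j < n" using nk by auto
      hence "(n - 2 * j = i) \<longleftrightarrow> (j = (n - i) div 2 \<and> i \<le> n \<and> even (n - i))" by presburger
      thus "(if n - 2 * j = i then co j else 0) =
          (if j = (n - i) div 2 then (if i \<le> n \<and> even (n - i) then co j else 0) else 0)" by auto
    qed
    also have "\<dots> = (if (n - i) div 2 \<in> {0..k} then (if i \<le> n \<and> even (n - i) then co ((n - i) div 2) else 0) else 0)"
      by (rule sum.delta) simp
    also have "\<dots> = dc n D i"
    proof (cases "i \<le> n \<and> even (n - i)")
      case True
      hence "i \<ge> 1" using nk by (cases i) auto
      hence "(n - i) div 2 \<le> k" using nk by auto
      thus ?thesis using True co by (simp add: dc_def)
    qed (auto simp: dc_def)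
    finally show ?thesis .
  qed
  have "(\<Sum>j\<in>{0..k}. monom (co j) (n - 2 * j)) = dick n D"
  proof (rule poly_eqI)
    fix i show "coeff (\<Sum>j\<in>{0..k}. monom (co j) (n - 2 * j)) i = coeff (dick n D) i"
      using cs[of i] coeff_dick[OF n0, of D i] by simp
  qed
  thus ?thesis unfolding fpoly_def Let_def D_def[symmetric] k_def[symmetric] co_def[symmetric]
    by simp
qed

lemma dick_compose_complex:
  fixes c :: complex
  assumes "c \<noteq> 0"
  shows "dick (p * m) c = pcompose (dick p (c ^ m)) (dick m c)"
proof -
  have "poly (dick (p * m) c) z = poly (pcompose (dick p (c ^ m)) (dick m c)) z" for z
  proof -
    define u where "u = (z + csqrt (z\<^sup>2 - 4 * c)) / 2"
    have "u * (z - u) = c"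
    proof -
      have "(csqrt (z\<^sup>2 - 4 * c))\<^sup>2 = z\<^sup>2 - 4 * c" by simp
      thus ?thesis unfolding u_def by (simp add: field_simps power2_eq_square)
    qed
    hence u0: "u \<noteq> 0" using assms by auto
    have zu: "z = u + c / u" using \<open>u * (z - u) = c\<close> u0 by (auto simp: field_simps)
    have um: "u ^ m \<noteq> 0" using u0 by simp
    have "poly (pcompose (dick p (c ^ m)) (dick m c)) z = poly (dick p (c ^ m)) (u ^ m + c ^ m / u ^ m)"
      by (simp add: poly_pcompose zu poly_dick[OF u0] power_divide)
    also have "\<dots> = (u ^ m) ^ p + (c ^ m / u ^ m) ^ p" by (rule poly_dick[OF um])
    also have "\<dots> = poly (dick (p * m) c) z"
      by (simp add: zu poly_dick[OF u0] power_divide power_mult[symmetric] mult.commute)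
    finally show ?thesis by simp
  qed
  hence "poly (dick (p * m) c) = poly (pcompose (dick p (c ^ m)) (dick m c))" by (intro ext)
  thus ?thesis by (simp add: poly_eq_poly_eq_iff)
qed

lemma dick_compose:
  fixes c :: rat
  assumes "c \<noteq> 0"
  shows "dick (p * m) c = pcompose (dick p (c ^ m)) (dick m c)"
proof -
  have "rc (dick (p * m) c) = rc (pcompose (dick p (c ^ m)) (dick m c))"
    using dick_compose_complex[of "of_rat c" p m] assms by (simp add: of_rat_power)
  thus ?thesis by (simp only: rc_eq_iff)
qed

lemma of_real_of_rat_c: "(of_real (of_rat r) :: complex) = of_rat r"
  by (cases r) (simp add: of_rat_rat)

lemma rat_odd_power_inj:
  fixes x y :: rat
  assumes "odd p" "x ^ p = y ^ p"
  shows "x = y"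
proof -
  have "(of_rat x :: real) ^ p = of_rat y ^ p" using assms(2) by (metis of_rat_power)
  hence "root p ((of_rat x :: real) ^ p) = root p (of_rat y ^ p)" by simp
  hence "(of_rat x :: real) = of_rat y" using odd_real_root_power_cancel[OF assms(1)] by simp
  thus ?thesis by simp
qed

lemma quad_field_eq: "quad_field R = {of_rat a + of_rat b * sqrtR R | a b. True}"
  unfolding quad_field_def of_real_of_rat_c ..

locale qctx =
  fixes n :: nat and d R :: rat
  assumes nodd: "odd n" and n3: "n \<ge> 3" and d0: "d \<noteq> 0" and nsq: "\<not> (\<exists>q::rat. q^2 = R)"
begin

abbreviation "s \<equiv> sqrtR R"
abbreviation "K \<equiv> quad_field R"
definition "D = d\<^sup>2 - R"
definition "k = (n - 1) div 2"
definition "\<alpha> = (of_rat d + s :: complex)"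
definition "\<alpha>' = (of_rat d - s :: complex)"
definition "a = of_rat (D ^ k) * \<alpha>"
definition "a' = of_rat (D ^ k) * \<alpha>'"

lemma s2: "s ^ 2 = of_rat R"
  by (simp add: sqrtR_def of_real_of_rat_c)

lemma s_not_rat: "s \<noteq> of_rat q"
proof
  assume "s = of_rat q"
  hence "of_rat (q ^ 2) = (of_rat R :: complex)" using s2 by (simp add: of_rat_power)
  hence "q ^ 2 = R" by simp
  thus False using nsq by blast
qed

lemma s0: "s \<noteq> 0" using s_not_rat[of 0] by simp

lemma D0: "D \<noteq> 0"
  using nsq unfolding D_def by auto

lemma nk: "n = 2 * k + 1" unfolding k_def using nodd by presburger

lemma Dn: "D ^ n = (D ^ k) ^ 2 * D"
proof -
  have "D ^ n = D ^ (2 * k + 1)" using arg_cong[where f="\<lambda>m. D ^ m", OF nk] .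
  also have "\<dots> = (D ^ k) ^ 2 * D" by (simp add: power_add power_mult[symmetric] mult.commute)
  finally show ?thesis .
qed

lemma Dnc: "(of_rat (D ^ n) :: complex) = of_rat (D ^ k) ^ 2 * of_rat D"
  unfolding Dn by (simp add: of_rat_mult of_rat_power)

lemma alpha_prod: "\<alpha> * \<alpha>' = of_rat D"
  unfolding \<alpha>_def \<alpha>'_def D_def using s2
  by (simp add: algebra_simps power2_eq_square of_rat_diff of_rat_mult)

lemma alpha0: "\<alpha> \<noteq> 0" "\<alpha>' \<noteq> 0"
  using alpha_prod D0 by auto

lemma a0: "a \<noteq> 0" "a' \<noteq> 0"
  unfolding a_def a'_def using alpha0 D0 by auto

lemma aa': "a * a' = of_rat (D ^ n)"
proof -
  have "a * a' = of_rat (D ^ k) ^ 2 * (\<alpha> * \<alpha>')" unfolding a_def a'_def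
    by (simp add: power2_eq_square algebra_simps)
  thus ?thesis using alpha_prod Dnc by simp
qed

lemma a_plus: "a + a' = of_rat (2 * d * D ^ k)"
  unfolding a_def a'_def \<alpha>_def \<alpha>'_def by (simp add: of_rat_mult algebra_simps)

lemma alpha_ne: "\<alpha> \<noteq> \<alpha>'"
  unfolding \<alpha>_def \<alpha>'_def using s0 by simp

lemma a_sq: "a ^ 2 = of_rat (D ^ n) * (\<alpha> / \<alpha>')"
proof -
  have "a ^ 2 = of_rat (D ^ k) ^ 2 * \<alpha> ^ 2" unfolding a_def by (simp add: power_mult_distrib)
  also have "\<alpha> ^ 2 = of_rat D * (\<alpha> / \<alpha>')" using alpha_prod alpha0
    by (simp add: field_simps power2_eq_square)
  also have "of_rat (D ^ k) ^ 2 * (of_rat D * (\<alpha> / \<alpha>')) = of_rat (D ^ n) * (\<alpha> / \<alpha>')"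
    using Dnc by simp
  finally show ?thesis .
qed

lemma K_subfield: "subfieldC K"
proof -
  let ?f = "\<lambda>x y. of_rat x + of_rat y * s :: complex"
  have mem: "?f x y \<in> K" for x y unfolding quad_field_eq by blast
  have memE: "\<exists>x y. z = ?f x y" if "z \<in> K" for z using that unfolding quad_field_eq by blast
  have "0 \<in> K" using mem[of 0 0] by simp
  moreover have "1 \<in> K" using mem[of 1 0] by simp
  moreover have "u + v \<in> K \<and> u * v \<in> K" if uv: "u \<in> K" "v \<in> K" for u v
  proof -
    obtain x y where "u = ?f x y" using memE uv(1) by blast
    moreover obtain x' y' where "v = ?f x' y'" using memE uv(2) by blast
    moreover have "?f x y + ?f x' y' = ?f (x + x') (y + y')" by (simp add: of_rat_add algebra_simps)
    moreover have "?f x y * ?f x' y' = ?f (x * x' + y * y' * R) (x * y' + y * x')"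
      using s2 by (simp add: of_rat_add of_rat_mult algebra_simps power2_eq_square)
    ultimately show ?thesis using mem by metis
  qed
  moreover have "- u \<in> K \<and> inverse u \<in> K" if uK: "u \<in> K" for u
  proof -
    obtain x y where u: "u = ?f x y" using memE uK by blast
    have "- u = ?f (-x) (-y)" using u by (simp add: of_rat_minus)
    moreover have "inverse u \<in> K"
    proof (cases "x\<^sup>2 - y\<^sup>2 * R = 0")
      case True
      have "y = 0"
      proof (rule ccontr)
        assume "y \<noteq> 0"
        hence "(x / y)\<^sup>2 = R" using True by (simp add: field_simps power2_eq_square)
        thus False using nsq by blast
      qed
      hence "x = 0" using True by simp
      hence "inverse u = 0" using u \<open>y = 0\<close> by simp
      thus ?thesis using mem[of 0 0] by simp
    next
      case False
      define N where "N = x\<^sup>2 - y\<^sup>2 * R"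
      have N0: "(of_rat N :: complex) \<noteq> 0" using False by (simp add: N_def)
      have "?f x y * ?f x (-y) = of_rat x * of_rat x - of_rat y * of_rat y * (s * s)"
        by (simp add: of_rat_minus algebra_simps)
      also have "\<dots> = of_rat N" using s2
        by (simp add: N_def of_rat_diff of_rat_mult of_rat_power power2_eq_square)
      finally have uN: "u * ?f x (-y) = of_rat N" using u by simp
      have "?f (x / N) (- y / N) = ?f x (-y) / of_rat N"
        by (simp add: of_rat_divide of_rat_minus add_divide_distrib diff_divide_distrib)
      also have "\<dots> = inverse u" using uN N0
        by (metis divide_inverse mult.commute mult_zero_left nonzero_divide_eq_eq inverse_eq_divide
            nonzero_mult_div_cancel_left)
      finally have "inverse u = ?f (x / N) (- y / N)" ..
      thus ?thesis using mem by simp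
    qed
    ultimately show ?thesis using mem by simp
  qed
  ultimately show ?thesis unfolding subfieldC_def by blast
qed

lemma rat_in_K: "of_rat q \<in> K"
  using subfieldC_of_rat[OF K_subfield] .

lemma s_in_K: "s \<in> K"
  unfolding quad_field_eq by (intro CollectI exI[of _ 0] exI[of _ 1]) simp

lemma a_in_K: "a \<in> K"
  unfolding a_def \<alpha>_def using K_subfield rat_in_K s_in_K
  by (intro subfieldC_mult subfieldC_add) auto

lemma conj_lemma:
  assumes "poly (rc W) s = 0"
  shows "poly (rc W) (- s) = 0"
proof -
  define m2 where "m2 = [:- R, 0, 1:]"
  define r where "r = W mod m2"
  have m20: "m2 \<noteq> 0" by (simp add: m2_def)
  have "degree r < 2" using degree_mod_less'[of m2 W] m20 unfolding r_def
    by (cases "W mod m2 = 0") (auto simp: m2_def)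
  hence rr: "r = [:coeff r 0, coeff r 1:]"
    by (intro poly_eqI) (auto simp: coeff_pCons coeff_eq_0 split: nat.split)
  have Wd: "W = m2 * (W div m2) + r" unfolding r_def by simp
  have ms: "poly (rc m2) s = 0" "poly (rc m2) (- s) = 0"
    using s2 by (simp_all add: m2_def power2_eq_square of_rat_minus)
  have "poly (rc r) s = 0" using assms ms Wd by (metis add_0 mult_zero_left poly_add poly_mult rc_add rc_mult)
  hence e: "of_rat (coeff r 0) + of_rat (coeff r 1) * s = 0" by (subst (asm) rr) (simp add: mult.commute)
  have "coeff r 1 = 0"
  proof (rule ccontr)
    assume c1: "coeff r 1 \<noteq> 0"
    hence "s = of_rat (- coeff r 0 / coeff r 1)" using e
      by (simp add: of_rat_divide of_rat_minus field_simps) (metis add.commute add_eq_0_iff2 mult.commute)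
    thus False using s_not_rat by blast
  qed
  hence "coeff r 0 = 0" using e by simp
  hence "r = 0" using \<open>coeff r 1 = 0\<close> rr by simp
  hence "rc W = rc m2 * rc (W div m2)" using Wd by (metis add_0_right rc_mult)
  thus ?thesis using ms by simp
qed

end

context qctx
begin

lemma f_eq: "fpoly n d R = dick n D - [:2 * d * D ^ k:]"
  using fpoly_dick[OF nodd, of d R] unfolding D_def k_def .

lemma n1: "n \<ge> 1" using n3 by simp

lemma deg_minus_const:
  fixes q :: "'a::field poly"
  assumes "degree q \<ge> 1" shows "degree (q - [:c:]) = degree q"
proof -
  have e: "q - [:c:] = q + [:-c:]" by simp
  have "degree (q + [:-c:]) = degree q" by (rule degree_add_eq_left) (use assms in auto)
  thus ?thesis by (subst e)
qed

lemma f_degree: "degree (fpoly n d R) = n"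
  unfolding f_eq using dick_degree_lead[OF n1, of D] n1 by (subst deg_minus_const) auto

lemma f0: "fpoly n d R \<noteq> 0" using f_degree n3 by auto

lemma poly_f:
  assumes "u \<noteq> 0"
  shows "poly (rc (fpoly n d R)) (u + of_rat D / u) = u ^ n + (of_rat D / u) ^ n - of_rat (2 * d * D ^ k)"
  unfolding f_eq using poly_dick[OF assms] by simp

lemma root_split:
  assumes u0: "u \<noteq> 0" and r: "poly (rc (fpoly n d R)) (u + of_rat D / u) = 0"
  shows "u ^ n = a \<or> u ^ n = a'"
proof -
  define X where "X = u ^ n"
  have X0: "X \<noteq> 0" using u0 by (simp add: X_def)
  have "(of_rat D / u) ^ n = of_rat (D ^ n) / X" by (simp add: X_def power_divide of_rat_power)
  hence "X + of_rat (D ^ n) / X = a + a'" using poly_f[OF u0] r a_plus unfolding X_def by simp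
  hence "X * X + of_rat (D ^ n) = (a + a') * X" using X0 by (simp add: field_simps)
  hence "(X - a) * (X - a') = 0" using aa' by (simp add: algebra_simps)
  thus ?thesis unfolding X_def by simp
qed

lemma K_poly_const: "Fpoly K [:of_rat q:]"
  using Fpoly_const[OF K_subfield rat_in_K] .

lemma Fpoly_rc: "Fpoly K (rc g)"
  by (simp add: Fpoly_def rat_in_K)

lemma no_factor:
  assumes anp: "\<forall>p. prime p \<and> p dvd n \<longrightarrow> \<not> (\<exists>b\<in>K. b ^ p = a)"
    and fgh: "fpoly n d R = g * h" and dg: "degree g \<ge> 1" and dh: "degree h \<ge> 1"
  shows False
proof -
  have KF: "subfieldC K" by (rule K_subfield)
  have irr: "irrF K (xp n a)" by (rule capelli[OF KF nodd a_in_K a0(1) anp])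
  have g0: "g \<noteq> 0" "h \<noteq> 0" using f0 fgh by auto
  have rg0: "rc g \<noteq> 0" using g0 rc_eq_iff[of g 0] by simp
  define r where "r = degree g"
  have rn: "r < n" using f_degree fgh g0 dh degree_mult_eq[of g h] unfolding r_def by simp
  define Dc where "Dc = (of_rat D :: complex)"
  define G where "G = (\<Sum>i\<le>r. smult (of_rat (coeff g i)) (monom 1 (r - i) * [:Dc, 0, 1:] ^ i))"
  have poly_G: "poly G u = u ^ r * poly (rc g) (u + Dc / u)" if u0: "u \<noteq> 0" for u
  proof -
    have "poly (rc g) (u + Dc / u) = (\<Sum>i\<le>r. of_rat (coeff g i) * (u + Dc / u) ^ i)"
      by (simp add: poly_altdef r_def)
    hence "u ^ r * poly (rc g) (u + Dc / u) = (\<Sum>i\<le>r. of_rat (coeff g i) * (u ^ r * (u + Dc / u) ^ i))"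
      by (simp add: sum_distrib_left algebra_simps)
    also have "\<dots> = (\<Sum>i\<le>r. of_rat (coeff g i) * (u ^ (r - i) * (Dc + u * u) ^ i))"
    proof (intro sum.cong refl)
      fix i assume "i \<in> {..r}"
      hence "u ^ r = u ^ (r - i) * u ^ i" by (simp add: power_add[symmetric])
      moreover have "u * (u + Dc / u) = Dc + u * u" using u0 by (simp add: field_simps)
      ultimately have "u ^ r * (u + Dc / u) ^ i = u ^ (r - i) * (Dc + u * u) ^ i"
        by (metis mult.assoc power_mult_distrib)
      thus "of_rat (coeff g i) * (u ^ r * (u + Dc / u) ^ i) =
          of_rat (coeff g i) * (u ^ (r - i) * (Dc + u * u) ^ i)" by simp
    qed
    also have "\<dots> = poly G u" by (simp add: G_def poly_sum poly_monom)
    finally show ?thesis by simp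
  qed
  have FG: "Fpoly K G" unfolding G_def
    by (intro Fpoly_sum[OF KF] Fpoly_smult[OF KF] Fpoly_mult[OF KF] Fpoly_monom[OF KF] Fpoly_power[OF KF]
        Fpoly_pCons[OF KF] rat_in_K Fpoly_1[OF KF] subfieldC_0[OF KF] subfieldC_1[OF KF])
      (simp_all add: Dc_def rat_in_K Fpoly_0[OF KF])
  have FP: "Fpoly K (xp n a)" using Fpoly_xp[OF KF a_in_K] .
  have n0: "n > 0" using n3 by simp
  have P0: "xp n a \<noteq> 0" using xp_nonzero[OF n0] .
  obtain H A B where HAB: "Fpoly K H" "Fpoly K A" "Fpoly K B" "H = A * xp n a + B * G"
    "H dvd xp n a" "H dvd G"
    using Fbezout[OF KF FP FG] by blast
  obtain z0 where z0: "poly (rc g) z0 = 0" using has_root_complex[of "rc g"] dg by auto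
  have fz0: "poly (rc (fpoly n d R)) z0 = 0" using z0 fgh by simp
  define u where "u = (z0 + csqrt (z0\<^sup>2 - 4 * Dc)) / 2"
  have "u * (z0 - u) = Dc"
  proof -
    have "(csqrt (z0\<^sup>2 - 4 * Dc))\<^sup>2 = z0\<^sup>2 - 4 * Dc" by simp
    thus ?thesis unfolding u_def by (simp add: field_simps power2_eq_square)
  qed
  moreover have Dc0: "Dc \<noteq> 0" using D0 by (simp add: Dc_def)
  ultimately have u0: "u \<noteq> 0" by auto
  have zu: "z0 = u + Dc / u" using \<open>u * (z0 - u) = Dc\<close> u0 by (auto simp: field_simps)
  obtain w where w: "w ^ n = a" "w \<noteq> 0" "z0 = w + Dc / w"
  proof (cases "u ^ n = a")
    case True thus ?thesis using that u0 zu by blast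
  next
    case False
    hence un: "u ^ n = a'" using root_split[OF u0] fz0 zu Dc_def by auto
    have "(Dc / u) ^ n = of_rat (D ^ n) / a'" using un by (simp add: Dc_def power_divide of_rat_power)
    also have "\<dots> = a" using aa' a0 by (simp add: field_simps)
    finally show ?thesis using that[of "Dc / u"] u0 Dc0 zu by (auto simp: field_simps)
  qed
  have "poly G w = 0" using poly_G[OF w(2)] w(3) z0 by simp
  moreover have "poly (xp n a) w = 0" using w(1) by simp
  ultimately have Hw: "poly H w = 0" using HAB(4) by simp
  have H0: "H \<noteq> 0" using HAB(5) P0 by auto
  have "degree H \<noteq> 0"
  proof
    assume "degree H = 0"
    then obtain c where "H = [:c:]" by (metis degree_eq_zeroE)
    thus False using Hw H0 by simp
  qed
  hence "degree H = degree (xp n a)" using irr HAB(1,5) by (auto simp: irrF_def)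
  hence "xp n a dvd H" using dvd_same_degree HAB(5) P0 by blast
  hence PG: "xp n a dvd G" using HAB(6) by (rule dvd_trans)
  define \<phi> where "\<phi> = (\<lambda>w. w + Dc / w)"
  define Rt where "Rt = {w. w ^ n = a}"
  have sub: "\<phi> ` Rt \<subseteq> {x. poly (rc g) x = 0}"
  proof
    fix x assume "x \<in> \<phi> ` Rt"
    then obtain w' where w': "w' ^ n = a" "x = \<phi> w'" unfolding Rt_def by blast
    have w'0: "w' \<noteq> 0" using w'(1) a0 n0 by (auto simp: power_0_left)
    obtain q where "G = xp n a * q" using PG by blast
    hence "poly G w' = 0" using w'(1) by simp
    thus "x \<in> {x. poly (rc g) x = 0}" using poly_G[OF w'0] w'0 w'(2) by (simp add: \<phi>_def)
  qed
  have inj: "inj_on \<phi> Rt"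
  proof (rule inj_onI)
    fix w1 w2 assume w1: "w1 \<in> Rt" and w2: "w2 \<in> Rt" and e: "\<phi> w1 = \<phi> w2"
    have nz: "w1 \<noteq> 0" "w2 \<noteq> 0" using w1 w2 a0 n0 by (auto simp: Rt_def power_0_left)
    have "(w1 - w2) * (w1 * w2 - Dc) = 0"
      using e nz by (simp add: \<phi>_def field_simps)
    moreover have "w1 * w2 \<noteq> Dc"
    proof
      assume "w1 * w2 = Dc"
      hence "(w1 * w2) ^ n = of_rat (D ^ n)" by (simp add: Dc_def of_rat_power)
      hence "a ^ 2 = of_rat (D ^ n)" using w1 w2 by (simp add: Rt_def power_mult_distrib power2_eq_square)
      hence "of_rat (D ^ n) * (\<alpha> / \<alpha>') = of_rat (D ^ n)" using a_sq by simp
      hence "of_rat (D ^ n) * (\<alpha> / \<alpha>') = of_rat (D ^ n) * 1" by simp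
      moreover have "(of_rat (D ^ n) :: complex) \<noteq> 0" using D0 by simp
      ultimately have "\<alpha> / \<alpha>' = 1" by (rule mult_left_cancel[THEN iffD1, rotated])
      thus False using alpha_ne alpha0 by simp
    qed
    ultimately show "w1 = w2" by simp
  qed
  have "n = card Rt" unfolding Rt_def using card_nth_roots[OF a0(1) n0] by simp
  also have "\<dots> = card (\<phi> ` Rt)" using card_image[OF inj] by simp
  also have "\<dots> \<le> card {x. poly (rc g) x = 0}"
    using sub poly_roots_finite[of "rc g"] rg0 by (intro card_mono) auto
  also have "\<dots> \<le> r" using card_poly_roots_bound[of "rc g"] rg0 by (simp add: r_def)
  finally show False using rn by simp
qed

end

context qctx
begin

lemma irr_dir:
  assumes H: "\<forall>p. prime p \<and> p dvd n \<longrightarrow> \<not> (\<exists>x\<in>K. x ^ p = \<alpha> / \<alpha>')"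
  shows "irreducible (fpoly n d R)"
proof -
  have anp: "\<forall>p. prime p \<and> p dvd n \<longrightarrow> \<not> (\<exists>b\<in>K. b ^ p = a)"
  proof (intro allI impI notI)
    fix p assume p: "prime p \<and> p dvd n" and "\<exists>b\<in>K. b ^ p = a"
    then obtain b where b: "b \<in> K" "b ^ p = a" by blast
    define m where "m = n div p"
    have nm: "n = m * p" using p unfolding m_def by simp
    define x where "x = b ^ 2 / of_rat (D ^ m)"
    have "x \<in> K" unfolding x_def using K_subfield b(1) rat_in_K
      by (intro subfieldC_divide subfieldC_power) auto
    moreover have "x ^ p = \<alpha> / \<alpha>'"
    proof -
      have "x ^ p = (b ^ p) ^ 2 / of_rat (D ^ n)" unfolding x_def nm
        by (simp add: power_divide power_mult[symmetric] mult.commute of_rat_power)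
      also have "\<dots> = \<alpha> / \<alpha>'" using b(2) a_sq D0 by simp
      finally show ?thesis .
    qed
    ultimately show False using H p by blast
  qed
  show ?thesis unfolding irreducible_def
  proof (intro conjI allI impI)
    show "fpoly n d R \<noteq> 0" by (rule f0)
    show "\<not> fpoly n d R dvd 1"
      using is_unit_iff_degree[OF f0] f_degree n3 by simp
  next
    fix g h assume fgh: "fpoly n d R = g * h"
    have g0: "g \<noteq> 0" "h \<noteq> 0" using fgh f0 by auto
    show "g dvd 1 \<or> h dvd 1"
    proof (rule ccontr)
      assume "\<not> (g dvd 1 \<or> h dvd 1)"
      hence "degree g \<ge> 1" "degree h \<ge> 1"
        using is_unit_iff_degree[OF g0(1)] is_unit_iff_degree[OF g0(2)] by auto
      thus False using no_factor[OF anp fgh] by blast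
    qed
  qed
qed

lemma red_dir:
  assumes p: "prime p" "p dvd n" and xK: "x \<in> K" and xp: "x ^ p = \<alpha> / \<alpha>'"
  shows "\<not> irreducible (fpoly n d R)"
proof
  assume irr: "irreducible (fpoly n d R)"
  define m where "m = n div p"
  have nm: "n = p * m" using p unfolding m_def by simp
  have podd: "odd p" using nm nodd by auto
  have p2: "p \<ge> 2" using p prime_ge_2_nat by blast
  have m1: "m \<ge> 1" using nm n3 by (cases m) auto
  have mn: "m < n" using nm p2 m1 by (simp add: less_le_trans[of m "2*m" "p*m"])
  define u where "u = (p + 1) div 2"
  have u2: "2 * u = p + 1" using podd unfolding u_def by presburger
  define y where "y = x ^ u * of_rat (D ^ (m * u)) / a"
  have yK: "y \<in> K" unfolding y_def using K_subfield xK rat_in_K a_in_K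
    by (intro subfieldC_divide subfieldC_mult subfieldC_power) auto
  have ya: "y ^ p = a"
  proof -
    have "y ^ p = (x ^ p) ^ u * of_rat (D ^ n) ^ u / a ^ p" unfolding y_def nm
      by (simp add: power_divide power_mult_distrib power_mult[symmetric] mult.commute of_rat_power
          mult.left_commute)
    also have "\<dots> = (of_rat (D ^ n) * (\<alpha> / \<alpha>')) ^ u / a ^ p"
      by (simp only: xp power_mult_distrib mult.commute)
    also have "\<dots> = a ^ (2 * u) / a ^ p" using a_sq by (simp add: power_mult)
    also have "\<dots> = a" using u2 a0 by simp
    finally show ?thesis .
  qed
  have y0: "y \<noteq> 0" using ya a0 p2 by (auto simp: power_0_left)
  obtain y0 y1 where yy: "y = of_rat y0 + of_rat y1 * s" using yK unfolding quad_field_eq by blast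
  define y' where "y' = of_rat y0 - of_rat y1 * s"
  define W where "W = [:y0, y1:] ^ p - [:D ^ k * d, D ^ k:]"
  have "poly (rc W) s = y ^ p - a" unfolding W_def yy a_def \<alpha>_def
    by (simp add: of_rat_mult algebra_simps)
  hence "poly (rc W) (- s) = 0" using ya conj_lemma by simp
  hence y'a: "y' ^ p = a'" unfolding W_def y'_def a'_def \<alpha>'_def
    by (simp add: of_rat_mult algebra_simps)
  define N where "N = y0\<^sup>2 - y1\<^sup>2 * R"
  have yy': "y * y' = of_rat N" unfolding yy y'_def N_def using s2
    by (simp add: algebra_simps power2_eq_square of_rat_diff of_rat_mult)
  have Dnm: "D ^ n = (D ^ m) ^ p"
  proof -
    have "D ^ n = D ^ (p * m)" using arg_cong[where f="\<lambda>j. D ^ j", OF nm] .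
    thus ?thesis by (simp add: power_mult[symmetric] mult.commute)
  qed
  have "(of_rat (N ^ p) :: complex) = (y * y') ^ p" using yy' by (simp add: of_rat_power)
  also have "\<dots> = a * a'" using ya y'a by (simp add: power_mult_distrib)
  also have "\<dots> = of_rat ((D ^ m) ^ p)" using aa' Dnm by simp
  finally have "(of_rat (N ^ p) :: complex) = of_rat ((D ^ m) ^ p)" .
  hence NDm: "N = D ^ m" using rat_odd_power_inj[OF podd] by simp
  define c0 where "c0 = 2 * y0"
  have ysum: "y + y' = of_rat c0" unfolding yy y'_def c0_def by (simp add: of_rat_mult)
  have y'eq: "y' = of_rat (D ^ m) / y" using yy' NDm y0 by (simp add: field_simps)
  have "of_rat (poly (dick p (D ^ m)) c0) = (of_rat (2 * d * D ^ k) :: complex)"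
  proof -
    have "(of_rat (poly (dick p (D ^ m)) c0) :: complex) = poly (rc (dick p (D ^ m))) (of_rat c0)"
      by (rule poly_rc_of_rat[symmetric])
    also have "\<dots> = poly (dick p (of_rat (D ^ m))) (y + of_rat (D ^ m) / y)"
      using ysum y'eq by simp
    also have "\<dots> = y ^ p + y' ^ p" using poly_dick[OF y0] y'eq by simp
    also have "\<dots> = of_rat (2 * d * D ^ k)" using ya y'a a_plus by simp
    finally show ?thesis .
  qed
  hence "poly (dick p (D ^ m) - [:2 * d * D ^ k:]) c0 = 0" by simp
  hence "[:- c0, 1:] dvd dick p (D ^ m) - [:2 * d * D ^ k:]" by (simp only: poly_eq_0_iff_dvd)
  then obtain W2 where W2: "dick p (D ^ m) - [:2 * d * D ^ k:] = [:- c0, 1:] * W2"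
    by (rule dvdE)
  have dn: "dick n D = pcompose (dick p (D ^ m)) (dick m D)"
    by (subst nm) (rule dick_compose[OF D0])
  have "fpoly n d R = pcompose (dick p (D ^ m) - [:2 * d * D ^ k:]) (dick m D)"
    unfolding f_eq dn by (simp add: pcompose_diff)
  also have "\<dots> = pcompose [:- c0, 1:] (dick m D) * pcompose W2 (dick m D)"
    unfolding W2 by (rule pcompose_mult)
  also have "pcompose [:- c0, 1:] (dick m D) = dick m D - [:c0:]"
    by (simp add: pcompose_pCons)
  finally have fgh: "fpoly n d R = (dick m D - [:c0:]) * pcompose W2 (dick m D)" .
  have dg: "degree (dick m D - [:c0:]) = m"
    using deg_minus_const[of "dick m D" c0] dick_degree_lead[OF m1, of D] m1 by simp
  have g0: "dick m D - [:c0:] \<noteq> 0" "pcompose W2 (dick m D) \<noteq> 0" using fgh f0 by auto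
  have "degree (pcompose W2 (dick m D)) = n - m"
    using fgh f_degree dg degree_mult_eq[OF g0] by simp
  hence "degree (pcompose W2 (dick m D)) \<noteq> 0" using mn by simp
  moreover have "degree (dick m D - [:c0:]) \<noteq> 0" using dg m1 by simp
  ultimately have "\<not> is_unit (dick m D - [:c0:])" "\<not> is_unit (pcompose W2 (dick m D))"
    using is_unit_iff_degree[OF g0(1)] is_unit_iff_degree[OF g0(2)] by auto
  thus False using irr fgh unfolding irreducible_def by blast
qed

end

theorem theorem2:
  fixes n :: nat and d R :: rat
  assumes "odd n" and "n \<ge> 3" and "d \<noteq> 0" and "\<not> (\<exists>q::rat. q^2 = R)"
  shows "irreducible (fpoly n d R) \<longleftrightarrow>
    (\<forall>p::nat. prime p \<and> p dvd n \<longrightarrow>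
       \<not> (\<exists>x\<in>quad_field R.
             x ^ p = (of_real (of_rat d) + sqrtR R) / (of_real (of_rat d) - sqrtR R)))"
proof -
  interpret q: qctx n d R by unfold_locales (use assms in auto)
  have b: "(of_real (of_rat d) + sqrtR R) / (of_real (of_rat d) - sqrtR R) = q.\<alpha> / q.\<alpha>'"
    unfolding q.\<alpha>_def q.\<alpha>'_def of_real_of_rat_c ..
  show ?thesis unfolding b using q.irr_dir q.red_dir by blast
qed

end
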